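(* Let $\Lambda=(\mathbf a_1\ \cdots\ \mathbf a_m)$ be an $R$-characteristic map over $K$, and let $(\mathbf r^1,1),\dots,(\mathbf r^k,k)$ be reduced marked row vectors in $R^m$ with markings $1,\dots,k$ respectively ($k\ge1$). Then the matrix $\operatorname{proj}_{k_1}M(\Lambda;\mathbf r^1,\dots,\mathbf r^k)$, with its column $k_2$ relabeled $k$, is D-J equivalent (equal up to left multiplication by $GL_{n+k-1}(R)$) to $M\big(\Lambda^{\mathbf r^k};(\mathbf r^1)^{\mathbf r^k},\dots,(\mathbf r^{k-1})^{\mathbf r^k}\big)$.
   Context: $R\in\{\mathbb Z,\mathbb Z_2\}$; $K$ is an $(n-1)$-dimensional star-shaped simplicial sphere on $[m]$; an $R$-characteristic map $\Lambda:[m]\to R^n$ sends the vertices of each $(n-1)$-face to a $\mathbb Z$-basis of $\mathbb Z^n$ ($R=\mathbb Z$) or a basis of $\mathbb Z_2^n$ ($R=\mathbb Z_2$); it is written as the $n\times m$ matrix with columns $\mathbf a_i=\Lambda(i)$. A marked row vector is a pair $(\mathbf r,v)$ with $\mathbf r=(r_1,\dots,r_m)\in R^m$ and $v\in[m]$ (the marking); it is reduced if $r_v=0$. For marked row vectors $(\mathbf r^t,t)$, $t=1,\dots,k$, $M(\Lambda;\mathbf r^1,\dots,\mathbf r^k)$ is the $(n+k)\times(m+k)$ matrix with columns labeled $1_1,1_2,2_1,2_2,\dots,k_1,k_2,k+1,\dots,m$, whose top $n$ rows have $\mathbf a_i$ in columns $i_1$ ($i\le k$) and $i$ ($i>k$)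 and $0$ in columns $i_2$, and whose row $n+t$ has entry $r^t_i-\delta_{it}$ in column $i_1$, $\delta_{it}$ in column $i_2$ ($i\le k$), and $r^t_i$ in column $i$ ($i>k$). For a matrix $M$ and a column $c$ of $M$ which is part of a basis of $R^N$ (primitive), $\operatorname{proj}_cM$ is obtained by choosing $g\in GL_N(R)$ with $g\,M_c$ the last standard basis vector and deleting from $gM$ the last row and column $c$ (defined up to left multiplication by $GL_{N-1}(R)$). For a reduced marked row vector $(\mathbf s,w)$, $\Lambda^{\mathbf s}$ is the $n\times m$ matrix whose $w$-th column is $\mathbf a_w$ and whose $i$-th column is $\mathbf a_i+s_i\mathbf a_w$ for $i\ne w$. For reduced marked row vectors $(\mathbf r,v)$, $(\mathbf s,w)$ with $v\ne w$, $\mathbf r^{\mathbf s}$ is the marked row vector with marking $v$ and entries $(\mathbf r^{\mathbf s})_w=r_w$ and $(\mathbf r^{\mathbf s})_i=r_i+s_ir_w$ for $i\ne w$. *)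

theory Defs
  imports "HOL-Analysis.Analysis" "HOL-Library.Z2" "Jordan_Normal_Form.Matrix"
begin

(* Conventions: vertices are 1..m; a matrix with columns labelled 1..m is a
   Jordan_Normal_Form matrix whose 0-based column (i-1) is the column labelled i.
   A row vector r in R^m is a vec of dimension m with r_i = r $ (i-1). *)

definition ring_iso_to :: "('a::comm_ring_1 \<Rightarrow> 'b::comm_ring_1) \<Rightarrow> bool" where
  "ring_iso_to f \<longleftrightarrow> bij f \<and> f 1 = 1 \<and>
     (\<forall>x y. f (x + y) = f x + f y \<and> f (x * y) = f x * f y)"

definition R_is_Z_or_Z2 :: "'a::comm_ring_1 itself \<Rightarrow> bool" where
  "R_is_Z_or_Z2 _ \<longleftrightarrow>
     (\<exists>f::'a \<Rightarrow> int. ring_iso_to f) \<or> (\<exists>f::'a \<Rightarrow> bit. ring_iso_to f)"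

definition simplicial_complex_on :: "nat set set \<Rightarrow> nat \<Rightarrow> bool" where
  "simplicial_complex_on K m \<longleftrightarrow>
     (\<forall>\<sigma>\<in>K. \<sigma> \<subseteq> {1..m}) \<and>
     (\<forall>\<sigma>\<in>K. \<forall>\<tau>. \<tau> \<subseteq> \<sigma> \<longrightarrow> \<tau> \<in> K) \<and>
     (\<forall>i\<in>{1..m}. {i} \<in> K)"

definition polyhedron :: "nat set set \<Rightarrow> (nat \<Rightarrow> 'v::real_vector) \<Rightarrow> 'v set" where
  "polyhedron K w = (\<Union>\<sigma>\<in>K. convex hull (w ` \<sigma>))"

definition geometric_realization :: "nat set set \<Rightarrow> (nat \<Rightarrow> 'v::real_vector) \<Rightarrow> bool" where
  "geometric_realization K w \<longleftrightarrow>
     (\<forall>\<sigma>\<in>K. inj_on w \<sigma> \<and> \<not> affine_dependent (w ` \<sigma>)) \<and>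
     (\<forall>\<sigma>\<in>K. \<forall>\<tau>\<in>K. convex hull (w ` \<sigma>) \<inter> convex hull (w ` \<tau>)
                       = convex hull (w ` (\<sigma> \<inter> \<tau>)))"

definition star_shaped_sphere ::
  "'n::finite itself \<Rightarrow> nat set set \<Rightarrow> nat \<Rightarrow> nat \<Rightarrow> bool" where
  "star_shaped_sphere _ K m n \<longleftrightarrow>
     CARD('n) = n \<and> simplicial_complex_on K m \<and>
     (\<forall>\<sigma>\<in>K. card \<sigma> \<le> n) \<and> (\<exists>\<sigma>\<in>K. card \<sigma> = n) \<and>
     (\<exists>(w::nat \<Rightarrow> real^'n) p.
        geometric_realization K w \<and>
        polyhedron K w homeomorphic sphere (0::real^'n) 1 \<and>
        (\<forall>u. u \<noteq> 0 \<longrightarrow> (\<exists>!x. x \<in> polyhedron K w \<and> (\<exists>t\<ge>0. x = p + t *\<^sub>R u))))"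

(* Lambda (n x m) sends the vertices of each (n-1)-face of K to a basis of R^n:
   every v in R^n is a unique R-linear combination of the a_i, i in sigma *)
definition characteristic_map :: "nat set set \<Rightarrow> nat \<Rightarrow> nat \<Rightarrow> 'a::comm_ring_1 mat \<Rightarrow> bool" where
  "characteristic_map K m n \<Lambda> \<longleftrightarrow> \<Lambda> \<in> carrier_mat n m \<and>
     (\<forall>\<sigma>\<in>K. card \<sigma> = n \<longrightarrow>
        (\<forall>v \<in> carrier_vec n. \<exists>!c::nat \<Rightarrow> 'a.
            (\<forall>i. i \<notin> \<sigma> \<longrightarrow> c i = 0) \<and>
            (\<forall>\<rho><n. v $ \<rho> = (\<Sum>i\<in>\<sigma>. c i * \<Lambda> $$ (\<rho>, i - 1)))))"

definition reduced_marked :: "nat \<Rightarrow> 'a::zero vec \<Rightarrow> nat \<Rightarrow> bool" where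
  "reduced_marked m r v \<longleftrightarrow> r \<in> carrier_vec m \<and> v \<in> {1..m} \<and> r $ (v - 1) = 0"

(* Columns (0-based positions) are in the order
   1_1, 1_2, 2_1, 2_2, ..., k_1, k_2, k+1, ..., m:
   position 2(i-1) is i_1, position 2(i-1)+1 is i_2 (i \<le> k),
   position k+i-1 is i (i > k). Row n+t-1 (0-based) is the row of r^t. *)
definition M_mat :: "'a::comm_ring_1 mat \<Rightarrow> 'a vec list \<Rightarrow> 'a mat" where
  "M_mat \<Lambda> rs = (let n = dim_row \<Lambda>; m = dim_col \<Lambda>; k = length rs in
     mat (n + k) (m + k) (\<lambda>(\<rho>, c).
       let i = (if c < 2 * k then c div 2 + 1 else c - k + 1);
           second = (c < 2 * k \<and> c mod 2 = 1) in
       if \<rho> < n then (if second then 0 else \<Lambda> $$ (\<rho>, i - 1))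
       else (let t = \<rho> - n + 1; r = rs ! (t - 1);
                 \<delta> = (if i = t then 1 else 0) in
             if c < 2 * k then (if second then \<delta> else r $ (i - 1) - \<delta>)
             else r $ (i - 1))))"

definition delete_last_row_col :: "'a mat \<Rightarrow> nat \<Rightarrow> 'a mat" where
  "delete_last_row_col A c = mat (dim_row A - 1) (dim_col A - 1)
     (\<lambda>(i, j). A $$ (i, if j < c then j else Suc j))"

(* all representatives of proj_c A: choose g in GL_N(R) with g A_c = e_N,
   and delete from gA the last row and column c *)
definition proj_reps :: "'a::comm_ring_1 mat \<Rightarrow> nat \<Rightarrow> 'a mat set" where
  "proj_reps A c = {delete_last_row_col (g * A) c | g.
     g \<in> carrier_mat (dim_row A) (dim_row A) \<and> invertible_mat g \<and>
     g *\<^sub>v col A c = unit_vec (dim_row A) (dim_row A - 1)}"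

definition DJ_equiv :: "'a::comm_ring_1 mat \<Rightarrow> 'a mat \<Rightarrow> bool" where
  "DJ_equiv A B \<longleftrightarrow> (\<exists>h. h \<in> carrier_mat (dim_row A) (dim_row A) \<and>
     invertible_mat h \<and> B \<in> carrier_mat (dim_row A) (dim_col A) \<and> A = h * B)"

definition Lambda_twist :: "'a::comm_ring_1 mat \<Rightarrow> 'a vec \<Rightarrow> nat \<Rightarrow> 'a mat" where
  "Lambda_twist \<Lambda> s w = mat (dim_row \<Lambda>) (dim_col \<Lambda>) (\<lambda>(\<rho>, j).
     if j = w - 1 then \<Lambda> $$ (\<rho>, j) else \<Lambda> $$ (\<rho>, j) + s $ j * \<Lambda> $$ (\<rho>, w - 1))"

definition row_twist :: "'a::comm_ring_1 vec \<Rightarrow> 'a vec \<Rightarrow> nat \<Rightarrow> 'a vec" where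
  "row_twist r s w = vec (dim_vec r) (\<lambda>j.
     if j = w - 1 then r $ j else r $ j + s $ j * r $ (w - 1))"

end

theory Submission
  imports Defs
begin

definition g0 :: "nat \<Rightarrow> 'a::comm_ring_1 vec \<Rightarrow> 'a mat" where
  "g0 N v = mat N N (\<lambda>(i,j). (if i = j then (if i = N - 1 then -1 else 1) else 0)
      + (if j = N - 1 \<and> i < N - 1 then v $ i else 0))"

lemma g0_carrier: "g0 N v \<in> carrier_mat N N" by (simp add: g0_def)

lemma g0_mult:
  assumes X: "X \<in> carrier_mat N nc" and i: "i < N" and j: "j < nc"
  shows "(g0 N v * X) $$ (i,j) = (if i < N - 1 then X$$(i,j) + v$i * X$$(N-1,j) else - X$$(N-1,j))"
proof -
  have "(g0 N v * X) $$ (i,j) = (\<Sum>l<N. g0 N v $$ (i,l) * X $$ (l,j))"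
    using X i j by (simp add: g0_def scalar_prod_def atLeast0LessThan)
  also have "\<dots> = (\<Sum>l<N. (if l = i then (if i = N - 1 then - X$$(l,j) else X$$(l,j)) else 0)
       + (if l = N - 1 then (if i < N - 1 then v$i * X$$(l,j) else 0) else 0))"
    by (intro sum.cong) (auto simp: g0_def i)
  also have "\<dots> = (if i < N - 1 then X$$(i,j) + v$i * X$$(N-1,j) else - X$$(N-1,j))"
    using i by (auto simp: sum.distrib)
  finally show ?thesis .
qed

lemma g0_sq:
  assumes N: "0 < N"
  shows "g0 N v * g0 N v = 1\<^sub>m N"
proof (rule eq_matI)
  fix i j assume ij: "i < dim_row (1\<^sub>m N)" "j < dim_col (1\<^sub>m N :: 'a mat)"
  show "(g0 N v * g0 N v) $$ (i, j) = 1\<^sub>m N $$ (i, j)"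
    using ij N by (subst g0_mult[OF g0_carrier]) (auto simp: g0_def)
qed (auto simp: g0_def)

lemma g0_inv: assumes N: "0 < N" shows "invertible_mat (g0 N v)"
  unfolding invertible_mat_def inverts_mat_def square_mat.simps
  apply (rule conjI, simp add: g0_def)
  apply (rule exI[of _ "g0 N v"])
  using g0_sq[OF N] by (simp add: g0_def)

lemma g0_col: fixes v :: "'a::comm_ring_1 vec" assumes "0 < N" "v \<in> carrier_vec N" "v $ (N-1) = -1"
  shows "col (g0 N v) (N-1) = v"
  by (rule eq_vecI) (use assms in \<open>auto simp: g0_def\<close>)

lemma g0_col_M:
  assumes M: "M \<in> carrier_mat N nc" and c: "c < nc" and N: "0 < N"
    and last: "M $$ (N-1, c) = -1"
  shows "g0 N (col M c) *\<^sub>v col M c = unit_vec N (N-1)"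
proof -
  have "g0 N (col M c) *\<^sub>v col M c = col (g0 N (col M c) * M) c"
    using col_mult2[OF g0_carrier M c, symmetric] .
  also have "\<dots> = unit_vec N (N-1)"
  proof (rule eq_vecI)
    fix i assume "i < dim_vec (unit_vec N (N-1) :: 'a vec)"
    hence i: "i < N" by simp
    have "col (g0 N (col M c) * M) c $ i = (g0 N (col M c) * M) $$ (i,c)"
      using i c M g0_carrier[of N "col M c"] by (subst index_col) auto
    also have "\<dots> = (if i < N - 1 then M$$(i,c) + col M c $ i * M$$(N-1,c) else - M$$(N-1,c))"
      by (rule g0_mult[OF M i c])
    also have "\<dots> = unit_vec N (N-1) $ i" using i M c last by auto
    finally show "col (g0 N (col M c) * M) c $ i = unit_vec N (N-1) $ i" .
  qed (use M c g0_carrier[of N "col M c"] in auto)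
  finally show ?thesis .
qed

lemma del_mult:
  assumes h: "h \<in> carrier_mat N N" and hc: "col h (N-1) = unit_vec N (N-1)"
    and X: "X \<in> carrier_mat N nc" and N: "0 < N" and c: "c < nc"
  shows "delete_last_row_col (h * X) c
       = delete_last_row_col h (N-1) * delete_last_row_col X c"
proof (rule eq_matI)
  fix i j assume i: "i < dim_row (delete_last_row_col h (N-1) * delete_last_row_col X c)"
    and j: "j < dim_col (delete_last_row_col h (N-1) * delete_last_row_col X c)"
  define j' where "j' = (if j < c then j else Suc j)"
  have i': "i < N - 1" and j'': "j' < nc" using i j h X c by (auto simp: delete_last_row_col_def j'_def)
  have hz: "h $$ (i, N-1) = 0"
  proof -
    have "col h (N-1) $ i = 0" using hc i' by simp
    thus ?thesis using h i' N by simp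
  qed
  have "delete_last_row_col (h * X) c $$ (i,j) = (\<Sum>l<N. h $$ (i,l) * X $$ (l,j'))"
    using i' j'' h X j by (simp add: delete_last_row_col_def j'_def scalar_prod_def atLeast0LessThan)
  also have "\<dots> = (\<Sum>l<N-1. h $$ (i,l) * X $$ (l,j'))"
  proof -
    have "N = Suc (N-1)" using N by simp
    hence "(\<Sum>l<N. h $$ (i,l) * X $$ (l,j')) = (\<Sum>l<Suc (N-1). h $$ (i,l) * X $$ (l,j'))" by simp
    also have "\<dots> = (\<Sum>l<N-1. h $$ (i,l) * X $$ (l,j'))" using hz by simp
    finally show ?thesis .
  qed
  also have "\<dots> = (delete_last_row_col h (N-1) * delete_last_row_col X c) $$ (i,j)"
    using i' j'' h X j c by (simp add: delete_last_row_col_def j'_def scalar_prod_def atLeast0LessThan)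
  finally show "delete_last_row_col (h * X) c $$ (i,j) = (delete_last_row_col h (N-1) * delete_last_row_col X c) $$ (i,j)" .
qed (use h X in \<open>auto simp: delete_last_row_col_def\<close>)

lemma del_one: "delete_last_row_col (1\<^sub>m N) (N-1) = 1\<^sub>m (N-1)"
  by (rule eq_matI) (auto simp: delete_last_row_col_def)

lemma del_inv:
  assumes h: "h \<in> carrier_mat N N" and hc: "col h (N-1) = unit_vec N (N-1)"
    and inv: "invertible_mat h" and N: "0 < N"
  shows "invertible_mat (delete_last_row_col h (N-1))"
proof -
  obtain h1 where h10: "h * h1 = 1\<^sub>m N" "h1 * h = 1\<^sub>m (dim_row h1)"
    using inv h unfolding invertible_mat_def inverts_mat_def by auto
  have "dim_row h1 = N" using h10(2) h
    by (metis carrier_matD(2) index_mult_mat(3) index_one_mat(3))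
  with h10 have h1: "h * h1 = 1\<^sub>m N" "h1 * h = 1\<^sub>m N" by auto
  have h1c: "h1 \<in> carrier_mat N N"
    using h1 h by (metis carrier_matD carrier_matI index_mult_mat(2,3) index_one_mat(2,3))
  have "col h1 (N-1) = h1 *\<^sub>v col h (N-1)" unfolding hc
    by (rule eq_vecI) (use h1c N in auto)
  also have "\<dots> = col (h1 * h) (N-1)" using h h1c N by simp
  also have "\<dots> = unit_vec N (N-1)" using h1 N by simp
  finally have c1: "col h1 (N-1) = unit_vec N (N-1)" .
  have e: "delete_last_row_col (1\<^sub>m N) (N-1) = (1\<^sub>m (N-1) :: 'a mat)" by (rule del_one)
  have a: "delete_last_row_col h (N-1) * delete_last_row_col h1 (N-1) = 1\<^sub>m (N-1)"
    using del_mult[OF h hc h1c N, of "N-1"] h1 N e by simp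
  have b: "delete_last_row_col h1 (N-1) * delete_last_row_col h (N-1) = 1\<^sub>m (N-1)"
    using del_mult[OF h1c c1 h N, of "N-1"] h1 N e by simp
  show ?thesis unfolding invertible_mat_def inverts_mat_def square_mat.simps
    using a b h h1c by (auto simp: delete_last_row_col_def)
qed


lemma M_carrier: "M_mat \<Lambda> rs \<in> carrier_mat (dim_row \<Lambda> + length rs) (dim_col \<Lambda> + length rs)"
  by (simp add: M_mat_def Let_def)

lemma E_top_pair:
  assumes "\<rho> < dim_row \<Lambda>" "p < length rs" "length rs \<le> dim_col \<Lambda>"
  shows "M_mat \<Lambda> rs $$ (\<rho>, 2*p) = \<Lambda> $$ (\<rho>, p)"
    "M_mat \<Lambda> rs $$ (\<rho>, Suc (2*p)) = 0"
  using assms by (simp_all add: M_mat_def Let_def)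

lemma E_top_plain:
  assumes "\<rho> < dim_row \<Lambda>" "length rs \<le> q" "q < dim_col \<Lambda>"
  shows "M_mat \<Lambda> rs $$ (\<rho>, q + length rs) = \<Lambda> $$ (\<rho>, q)"
  using assms by (simp add: M_mat_def Let_def)

lemma E_bot_pair:
  assumes "t < length rs" "p < length rs" "length rs \<le> dim_col \<Lambda>"
  shows "M_mat \<Lambda> rs $$ (dim_row \<Lambda> + t, 2*p) = rs ! t $ p - (if p = t then 1 else 0)"
    "M_mat \<Lambda> rs $$ (dim_row \<Lambda> + t, Suc (2*p)) = (if p = t then 1 else 0)"
  using assms by (simp_all add: M_mat_def Let_def)

lemma E_bot_plain:
  assumes "t < length rs" "length rs \<le> q" "q < dim_col \<Lambda>"
  shows "M_mat \<Lambda> rs $$ (dim_row \<Lambda> + t, q + length rs) = rs ! t $ q"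
  using assms by (simp add: M_mat_def Let_def)

lemma key_entry:
  fixes \<Lambda> :: "'a::comm_ring_1 mat" and r :: "nat \<Rightarrow> 'a vec"
  assumes L: "\<Lambda> \<in> carrier_mat n m" and k: "k = Suc K1" "k \<le> m"
    and rc: "\<forall>t\<in>{1..k}. r t \<in> carrier_vec m"
    and rk: "r k $ K1 = 0"
    and i: "i < n + K1" and j: "j < m + K1"
  shows "M_mat \<Lambda> (map r [1..<k+1]) $$ (i, if j < 2*K1 then j else Suc j)
     + M_mat \<Lambda> (map r [1..<k+1]) $$ (i, 2*K1) * M_mat \<Lambda> (map r [1..<k+1]) $$ (n+K1, if j < 2*K1 then j else Suc j)
     = M_mat (Lambda_twist \<Lambda> (r k) k) (map (\<lambda>t. row_twist (r t) (r k) k) [1..<k]) $$ (i,j)"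
proof -
  define rs where "rs = map r [1..<k+1]"
  define rs' where "rs' = map (\<lambda>t. row_twist (r t) (r k) k) [1..<k]"
  define L' where "L' = Lambda_twist \<Lambda> (r k) k"
  have dL: "dim_row \<Lambda> = n" "dim_col \<Lambda> = m" using L by auto
  have dT: "dim_row L' = n" "dim_col L' = m"
    using L by (auto simp: Lambda_twist_def L'_def)
  have lrs: "length rs = k" "length rs' = K1" using k by (auto simp: rs_def rs'_def)
  have rsn: "\<And>t. t < k \<Longrightarrow> rs ! t = r (Suc t)" by (simp add: rs_def del: upt_Suc)
  have rsn': "\<And>t. t < K1 \<Longrightarrow> rs' ! t = row_twist (r (Suc t)) (r k) k" using k by (simp add: rs'_def del: upt_Suc)
  have L'e: "\<And>\<rho> q. \<rho> < n \<Longrightarrow> q < m \<Longrightarrow> L' $$ (\<rho>, q) =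
      (if q = K1 then \<Lambda> $$ (\<rho>, q) else \<Lambda> $$ (\<rho>, q) + r k $ q * \<Lambda> $$ (\<rho>, K1))"
    using L k by (simp add: L'_def Lambda_twist_def)
  have rte: "\<And>t q. t < K1 \<Longrightarrow> q < m \<Longrightarrow> row_twist (r (Suc t)) (r k) k $ q =
      (if q = K1 then r (Suc t) $ q else r (Suc t) $ q + r k $ q * r (Suc t) $ K1)"
  proof -
    fix t q assume "t < K1" "q < m"
    hence "r (Suc t) \<in> carrier_vec m" using rc k by auto
    thus "row_twist (r (Suc t)) (r k) k $ q =
      (if q = K1 then r (Suc t) $ q else r (Suc t) $ q + r k $ q * r (Suc t) $ K1)"
      using \<open>q < m\<close> k by (simp add: row_twist_def)
  qed
  have Km: "K1 < m" using k by simp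
  have lm: "length rs \<le> dim_col \<Lambda>" "length rs' \<le> dim_col L'" using lrs dL dT k by auto
  have rowK: "n + K1 = dim_row \<Lambda> + K1" using dL by simp
  have "M_mat \<Lambda> rs $$ (i, if j < 2*K1 then j else Suc j)
     + M_mat \<Lambda> rs $$ (i, 2*K1) * M_mat \<Lambda> rs $$ (n+K1, if j < 2*K1 then j else Suc j)
     = M_mat L' rs' $$ (i,j)" (is "?A + ?B * ?C = ?D")
  proof (cases "i < n")
    case True
    have ic: "M_mat \<Lambda> rs $$ (i, 2*K1) = \<Lambda> $$ (i, K1)"
      using E_top_pair(1)[of i \<Lambda> K1 rs] True dL lrs lm k by simp
    consider (e) p where "j = 2*p" "p < K1" | (o) p where "j = Suc (2*p)" "p < K1"
      | (b) "j = 2*K1" | (c) q where "j = q + K1" "K1 < q" "q < m"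
    proof -
      consider "j < 2*K1" | "j = 2*K1" | "j > 2*K1" by linarith
      thus thesis
      proof cases
        case 1
        have p: "j div 2 < K1" using 1 by simp
        show thesis
        proof (cases "even j")
          case True thus thesis using that(1)[of "j div 2"] p by simp
        next
          case False thus thesis using that(2)[of "j div 2"] p by (simp add: odd_two_times_div_two_succ)
        qed
      next
        case 2 thus thesis using that(3) by blast
      next
        case 3 thus thesis using that(4)[of "j - K1"] j by simp
      qed
    qed
    then show ?thesis
    proof cases
      case (e p)
      have pK: "p < k" using e k by simp
      have f1: "M_mat \<Lambda> rs $$ (i, 2*p) = \<Lambda> $$ (i, p)"
        using E_top_pair(1)[of i \<Lambda> p rs] True dL lrs lm pK by simp
      have f2: "M_mat \<Lambda> rs $$ (n+K1, 2*p) = r k $ p"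
        using E_bot_pair(1)[of K1 rs p \<Lambda>] dL lrs lm pK k rsn[of K1] e by simp
      have f3: "M_mat L' rs' $$ (i, 2*p) = L' $$ (i, p)"
        using E_top_pair(1)[of i L' p rs'] True dT lrs lm e by simp
      show ?thesis using e f1 f2 f3 ic L'e[of i p] Km True by (simp add: algebra_simps)
    next
      case (o p)
      have pK: "p < k" using o k by simp
      have f1: "M_mat \<Lambda> rs $$ (i, Suc (2*p)) = 0"
        using E_top_pair(2)[of i \<Lambda> p rs] True dL lrs lm pK by simp
      have f3: "M_mat L' rs' $$ (i, Suc (2*p)) = 0"
        using E_top_pair(2)[of i L' p rs'] True dT lrs lm o by simp
      have f2: "M_mat \<Lambda> rs $$ (n+K1, Suc (2*p)) = 0"
        using E_bot_pair(2)[of K1 rs p \<Lambda>] dL lrs lm pK k o by simp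
      show ?thesis using o f1 f2 f3 by simp
    next
      case b
      have f1: "M_mat \<Lambda> rs $$ (i, Suc (2*K1)) = 0"
        using E_top_pair(2)[of i \<Lambda> K1 rs] True dL lrs lm k by simp
      have f2: "M_mat \<Lambda> rs $$ (n+K1, Suc (2*K1)) = 1"
        using E_bot_pair(2)[of K1 rs K1 \<Lambda>] dL lrs lm k by simp
      have f3: "M_mat L' rs' $$ (i, 2 * K1) = L' $$ (i, K1)"
        using E_top_plain[of i L' rs' K1] True dT lrs lm Km by (simp add: mult_2)
      show ?thesis using b f1 f2 f3 ic L'e[of i K1] Km True by simp
    next
      case (c q)
      have f1: "M_mat \<Lambda> rs $$ (i, q + k) = \<Lambda> $$ (i, q)"
        using E_top_plain[of i \<Lambda> rs q] True dL lrs c k by simp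
      have f2: "M_mat \<Lambda> rs $$ (n+K1, q + k) = r k $ q"
        using E_bot_plain[of K1 rs q \<Lambda>] dL lrs c k rsn[of K1] by simp
      have f3: "M_mat L' rs' $$ (i, q + K1) = L' $$ (i, q)"
        using E_top_plain[of i L' rs' q] True dT lrs c by simp
      have sj: "(if j < 2*K1 then j else Suc j) = q + k" using c k by simp
      show ?thesis unfolding sj using c f1 f2 f3 ic L'e[of i q] True by (simp add: algebra_simps)
    qed
  next
    case False
    define t where "t = i - n"
    have t: "i = n + t" "t < K1" using False i by (auto simp: t_def)
    have ic: "M_mat \<Lambda> rs $$ (i, 2*K1) = r (Suc t) $ K1"
      using E_bot_pair(1)[of t rs K1 \<Lambda>] t dL lrs lm k rsn[of t] by simp
    consider (e) p where "j = 2*p" "p < K1" | (o) p where "j = Suc (2*p)" "p < K1"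
      | (b) "j = 2*K1" | (c) q where "j = q + K1" "K1 < q" "q < m"
    proof -
      consider "j < 2*K1" | "j = 2*K1" | "j > 2*K1" by linarith
      thus thesis
      proof cases
        case 1
        have p: "j div 2 < K1" using 1 by simp
        show thesis
        proof (cases "even j")
          case True thus thesis using that(1)[of "j div 2"] p by simp
        next
          case False thus thesis using that(2)[of "j div 2"] p by (simp add: odd_two_times_div_two_succ)
        qed
      next
        case 2 thus thesis using that(3) by blast
      next
        case 3 thus thesis using that(4)[of "j - K1"] j by simp
      qed
    qed
    then show ?thesis
    proof cases
      case (e p)
      have pK: "p < k" using e k by simp
      have f1: "M_mat \<Lambda> rs $$ (i, 2*p) = r (Suc t) $ p - (if p = t then 1 else 0)"
        using E_bot_pair(1)[of t rs p \<Lambda>] t dL lrs lm pK k rsn[of t] by simp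
      have f2: "M_mat \<Lambda> rs $$ (n+K1, 2*p) = r k $ p"
        using E_bot_pair(1)[of K1 rs p \<Lambda>] dL lrs lm pK k rsn[of K1] e by simp
      have f3: "M_mat L' rs' $$ (i, 2*p) = row_twist (r (Suc t)) (r k) k $ p - (if p = t then 1 else 0)"
        using E_bot_pair(1)[of t rs' p L'] t dT lrs lm e rsn'[of t] by simp
      have A: "?A = r (Suc t) $ p - (if p = t then 1 else 0)" using e f1 by simp
      have B: "?B = r (Suc t) $ K1" using ic .
      have C: "?C = r k $ p" using e f2 by simp
      have D: "?D = r (Suc t) $ p + r k $ p * r (Suc t) $ K1 - (if p = t then 1 else 0)"
        using e f3 rte[of t p] Km t by simp
      show ?thesis unfolding A B C D by (simp add: algebra_simps)
    next
      case (o p)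
      have pK: "p < k" using o k by simp
      have f1: "M_mat \<Lambda> rs $$ (i, Suc (2*p)) = (if p = t then 1 else 0)"
        using E_bot_pair(2)[of t rs p \<Lambda>] t dL lrs lm pK k by simp
      have f3: "M_mat L' rs' $$ (i, Suc (2*p)) = (if p = t then 1 else 0)"
        using E_bot_pair(2)[of t rs' p L'] t dT lrs lm o by simp
      have f2: "M_mat \<Lambda> rs $$ (n+K1, Suc (2*p)) = 0"
        using E_bot_pair(2)[of K1 rs p \<Lambda>] dL lrs lm pK k o by simp
      show ?thesis using o f1 f2 f3 by simp
    next
      case b
      have f1: "M_mat \<Lambda> rs $$ (i, Suc (2*K1)) = 0"
        using E_bot_pair(2)[of t rs K1 \<Lambda>] t dL lrs lm k by simp
      have f2: "M_mat \<Lambda> rs $$ (n+K1, Suc (2*K1)) = 1"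
        using E_bot_pair(2)[of K1 rs K1 \<Lambda>] dL lrs lm k by simp
      have f3: "M_mat L' rs' $$ (i, 2 * K1) = row_twist (r (Suc t)) (r k) k $ K1"
        using E_bot_plain[of t rs' K1 L'] t dT lrs lm Km rsn'[of t] by (simp add: mult_2)
      show ?thesis using b f1 f2 f3 ic rte[of t K1] Km t by simp
    next
      case (c q)
      have f1: "M_mat \<Lambda> rs $$ (i, q + k) = r (Suc t) $ q"
        using E_bot_plain[of t rs q \<Lambda>] t dL lrs c k rsn[of t] by simp
      have f2: "M_mat \<Lambda> rs $$ (n+K1, q + k) = r k $ q"
        using E_bot_plain[of K1 rs q \<Lambda>] dL lrs c k rsn[of K1] by simp
      have f3: "M_mat L' rs' $$ (i, q + K1) = row_twist (r (Suc t)) (r k) k $ q"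
        using E_bot_plain[of t rs' q L'] t dT lrs c rsn'[of t] by simp
      have sj: "(if j < 2*K1 then j else Suc j) = q + k" using c k by simp
      show ?thesis unfolding sj using c f1 f2 f3 ic rte[of t q] t by (simp add: algebra_simps)
    qed
  qed
  thus ?thesis unfolding rs_def rs'_def L'_def .
qed


lemma inv_obtain:
  assumes A: "A \<in> carrier_mat n n" and inv: "invertible_mat A"
  obtains B where "B \<in> carrier_mat n n" "A * B = 1\<^sub>m n" "B * A = 1\<^sub>m n"
proof -
  obtain B where h10: "A * B = 1\<^sub>m n" "B * A = 1\<^sub>m (dim_row B)"
    using inv A unfolding invertible_mat_def inverts_mat_def by auto
  have "dim_row B = n" using h10(2) A
    by (metis carrier_matD(2) index_mult_mat(3) index_one_mat(3))
  moreover have "dim_col B = n" using h10(1) by (metis index_mult_mat(3) index_one_mat(3))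
  ultimately show ?thesis using that h10 by auto
qed

lemma inv_mult:
  fixes A B :: "'a::comm_ring_1 mat"
  assumes A: "A \<in> carrier_mat n n" and B: "B \<in> carrier_mat n n"
    and iA: "invertible_mat A" and iB: "invertible_mat B"
  shows "invertible_mat (A * B)"
proof -
  obtain A1 where A1: "A1 \<in> carrier_mat n n" "A * A1 = 1\<^sub>m n" "A1 * A = 1\<^sub>m n" using inv_obtain[OF A iA] by blast
  obtain B1 where B1: "B1 \<in> carrier_mat n n" "B * B1 = 1\<^sub>m n" "B1 * B = 1\<^sub>m n" using inv_obtain[OF B iB] by blast
  have a1: "(A * B) * (B1 * A1) = A * (B * (B1 * A1))"
    using A B A1 B1 by (intro assoc_mult_mat) auto
  have a2: "B * (B1 * A1) = (B * B1) * A1"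
    using A B A1 B1 by (intro assoc_mult_mat[symmetric]) auto
  have 1: "(A * B) * (B1 * A1) = 1\<^sub>m n" unfolding a1 a2 using A1 B1 A by simp
  have b1: "(B1 * A1) * (A * B) = B1 * (A1 * (A * B))"
    using A B A1 B1 by (intro assoc_mult_mat) auto
  have b2: "A1 * (A * B) = (A1 * A) * B"
    using A B A1 B1 by (intro assoc_mult_mat[symmetric]) auto
  have 2: "(B1 * A1) * (A * B) = 1\<^sub>m n" unfolding b1 b2 using A1 B1 B by simp
  show ?thesis unfolding invertible_mat_def inverts_mat_def square_mat.simps
    using 1 2 A B A1 B1 by (intro conjI exI[of _ "B1 * A1"]) auto
qed

theorem mainTheorem9:
  fixes K :: "nat set set" and m n k :: nat
    and \<Lambda> :: "'a::comm_ring_1 mat" and r :: "nat \<Rightarrow> 'a vec"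
  assumes R: "R_is_Z_or_Z2 TYPE('a)"
    and K: "star_shaped_sphere TYPE('n::finite) K m n"
    and char: "characteristic_map K m n \<Lambda>"
    and k: "1 \<le> k"
    and red: "\<forall>t\<in>{1..k}. reduced_marked m (r t) t"
  shows "proj_reps (M_mat \<Lambda> (map r [1..<k+1])) (2 * (k - 1)) \<noteq> {} \<and>
         (\<forall>P \<in> proj_reps (M_mat \<Lambda> (map r [1..<k+1])) (2 * (k - 1)).
            DJ_equiv P (M_mat (Lambda_twist \<Lambda> (r k) k)
                              (map (\<lambda>t. row_twist (r t) (r k) k) [1..<k])))"
proof -
  obtain K1 where K1: "k = Suc K1" using k by (cases k) auto
  have L: "\<Lambda> \<in> carrier_mat n m" using char by (simp add: characteristic_map_def)
  have rc: "\<forall>t\<in>{1..k}. r t \<in> carrier_vec m" using red by (simp add: reduced_marked_def)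
  have km: "k \<le> m" using red k by (auto simp: reduced_marked_def)
  have rk: "r k $ K1 = 0" using bspec[OF red, of k] k K1 by (simp add: reduced_marked_def)
  define rs where "rs = map r [1..<k+1]"
  define M' where "M' = M_mat (Lambda_twist \<Lambda> (r k) k) (map (\<lambda>t. row_twist (r t) (r k) k) [1..<k])"
  define Mm where "Mm = M_mat \<Lambda> rs"
  define N where "N = n + k"
  define c where "c = 2 * K1"
  define G where "G = g0 N (col Mm c)"
  have lrs: "length rs = k" by (simp add: rs_def)
  have dL: "dim_row \<Lambda> = n" "dim_col \<Lambda> = m" using L by auto
  have Mc: "Mm \<in> carrier_mat N (m + k)" using M_carrier[of \<Lambda> rs] dL lrs by (simp add: Mm_def N_def)
  have N0: "0 < N" using K1 by (simp add: N_def)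
  have cl: "c < m + k" using km K1 by (simp add: c_def)
  have NK: "N - 1 = n + K1" using K1 by (simp add: N_def)
  have last: "Mm $$ (N-1, c) = -1"
  proof -
    have "rs ! K1 = r k" using K1 by (simp add: rs_def del: upt_Suc)
    thus ?thesis unfolding Mm_def NK c_def using E_bot_pair(1)[of K1 rs K1 \<Lambda>] dL lrs K1 km rk
      by simp
  qed
  have colc: "col Mm c \<in> carrier_vec N" using Mc by (simp add: carrier_vecI)
  have colN: "col Mm c $ (N-1) = -1" using last Mc cl N0 by simp
  have Gc: "G \<in> carrier_mat N N" by (simp add: G_def g0_carrier)
  have Gi: "invertible_mat G" using g0_inv[OF N0] by (simp add: G_def)
  have GG: "G * G = 1\<^sub>m N" using g0_sq[OF N0] by (simp add: G_def)
  have Gv: "G *\<^sub>v col Mm c = unit_vec N (N-1)" using g0_col_M[OF Mc cl N0 last] by (simp add: G_def)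
  have Gcol: "col G (N-1) = col Mm c" using g0_col[OF N0 colc colN] by (simp add: G_def)
  have DM: "delete_last_row_col (G * Mm) c = M'"
  proof (rule eq_matI)
    fix i j assume i: "i < dim_row M'" and j: "j < dim_col M'"
    have dM': "dim_row M' = n + K1" "dim_col M' = m + K1"
      using L K1 by (auto simp: M'_def M_mat_def Lambda_twist_def Let_def)
    define j' where "j' = (if j < c then j else Suc j)"
    have j'l: "j' < m + k" using j dM' K1 by (auto simp: j'_def)
    have il: "i < N" "i < N - 1" using i dM' NK by (auto simp: N_def)
    have "delete_last_row_col (G * Mm) c $$ (i,j) = (G * Mm) $$ (i, j')"
      using i j dM' Mc Gc NK cl K1 by (auto simp: delete_last_row_col_def j'_def)
    also have "\<dots> = Mm $$ (i,j') + col Mm c $ i * Mm $$ (N-1, j')"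
      using g0_mult[OF Mc il(1) j'l, of "col Mm c"] il by (simp add: G_def)
    also have "\<dots> = Mm $$ (i,j') + Mm $$ (i,c) * Mm $$ (N-1, j')"
      using Mc il cl by simp
    also have "\<dots> = M' $$ (i,j)"
      unfolding Mm_def rs_def M'_def j'_def c_def NK
      by (rule key_entry[OF L K1 km rc rk]) (use i j dM' in auto)
    finally show "delete_last_row_col (G * Mm) c $$ (i,j) = M' $$ (i,j)" .
  next
    show "dim_row (delete_last_row_col (G * Mm) c) = dim_row M'"
      using Gc Mc L K1 by (simp add: delete_last_row_col_def M'_def M_mat_def Lambda_twist_def Let_def N_def)
    show "dim_col (delete_last_row_col (G * Mm) c) = dim_col M'"
      using Gc Mc L K1 by (simp add: delete_last_row_col_def M'_def M_mat_def Lambda_twist_def Let_def N_def)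
  qed
  have dimM: "dim_row Mm = N" using Mc by simp
  have ne: "M' \<in> proj_reps Mm c"
    unfolding proj_reps_def dimM using Gc Gi Gv DM by blast
  have all: "DJ_equiv P M'" if P: "P \<in> proj_reps Mm c" for P
  proof -
    obtain g where g: "P = delete_last_row_col (g * Mm) c" "g \<in> carrier_mat N N"
      "invertible_mat g" "g *\<^sub>v col Mm c = unit_vec N (N-1)"
      using P unfolding proj_reps_def dimM by blast
    define h0 where "h0 = g * G"
    have h0c: "h0 \<in> carrier_mat N N" using g Gc by (simp add: h0_def)
    have h0i: "invertible_mat h0" using inv_mult[OF g(2) Gc g(3) Gi] by (simp add: h0_def)
    have h0col: "col h0 (N-1) = unit_vec N (N-1)"
      using g Gc Gcol N0 by (simp add: h0_def)
    have "g * Mm = g * ((G * G) * Mm)" using GG Mc by simp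
    also have "\<dots> = h0 * (G * Mm)" using g Gc Mc
      by (simp add: h0_def assoc_mult_mat[of _ N N _ N _ "m+k"])
    finally have gM: "g * Mm = h0 * (G * Mm)" .
    have GMc: "G * Mm \<in> carrier_mat N (m+k)" using Gc Mc by simp
    have "P = delete_last_row_col (h0 * (G * Mm)) c" using g(1) gM by simp
    also have "\<dots> = delete_last_row_col h0 (N-1) * delete_last_row_col (G * Mm) c"
      by (rule del_mult[OF h0c h0col GMc N0 cl])
    finally have Pe: "P = delete_last_row_col h0 (N-1) * M'" unfolding DM .
    have hc: "delete_last_row_col h0 (N-1) \<in> carrier_mat (N-1) (N-1)"
      using h0c by (simp add: delete_last_row_col_def)
    have M'c: "M' \<in> carrier_mat (N-1) (m+k-1)"
    proof (rule carrier_matI)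
      have "dim_row (delete_last_row_col (G * Mm) c) = N - 1" "dim_col (delete_last_row_col (G * Mm) c) = m + k - 1"
        using GMc unfolding delete_last_row_col_def by auto
      thus "dim_row M' = N - 1" "dim_col M' = m + k - 1" using DM by auto
    qed
    have dP: "dim_row P = N - 1" "dim_col P = m + k - 1" using Pe hc M'c by auto
    show ?thesis unfolding DJ_equiv_def dP
      using hc del_inv[OF h0c h0col h0i N0] M'c Pe by blast
  qed
  have ck: "2 * (k - 1) = c" using K1 by (simp add: c_def)
  show ?thesis unfolding ck rs_def[symmetric] Mm_def[symmetric] M'_def[symmetric]
    using ne all by blast
qed

end
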